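(* Let $(Q,\mathcal S)$ be a hypergraph with $Q=\{q_1,\dots,q_m\}$ and $\mathcal S=\{S_1,\dots,S_n\}$, where $n\ge 2$, every $S_j$ is a nonempty subset of $Q$, and $S_n=Q$. Let $G$ be the graph constructed from $(Q,\mathcal S)$ as follows. Its vertex set consists of the vertices $q_1,\dots,q_m$; vertices $S_1,\dots,S_n$; vertices $S_1',\dots,S_n'$; a vertex $q^i_j$ for every pair $(i,j)$ with $q_i\in S_j$ (let $Q'$ be the set of these); and vertices $q^*,u_1,u_2,v,w$. Its edges are: $q^i_jq_i$ and $q^i_jS_j$ for every $q^i_j\in Q'$; $q_iS_j'$ whenever $q_i\in S_j$; $S_jS_k'$ for all $j,k\in\{1,\dots,n\}$; $q^*u_1$, $q^*u_2$; $q^*q^i_j$ for every $q^i_j\in Q'$; $u_1S_j$ and $u_2S_j$ for every $j$; $u_1v$, $u_2v$; and $wS_j'$ for every $j$. Then $(Q,\mathcal S)$ has a $2$-colouring if and only if $G$ contains the path $P_5$ on five vertices as a contraction.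
   Context: A $2$-colouring of a hypergraph $(Q,\mathcal S)$ is a partition $(Q_1,Q_2)$ of $Q$ such that $Q_1\cap S\neq\emptyset$ and $Q_2\cap S\neq\emptyset$ for every $S\in\mathcal S$. Contracting an edge $uv$ means deleting $u$ and $v$ and adding a new vertex adjacent to $(N(u)\cup N(v))\setminus\{u,v\}$ (no multiple edges or loops). A graph contains $H$ as a contraction if $H$ can be obtained from it by a sequence of edge contractions. *)

theory Defs
  imports Main
begin

text \<open>A simple graph is a pair (V, E) with E a set of 2-element subsets of V.\<close>
type_synonym 'a graph = "'a set \<times> 'a set set"

text \<open>Loops and multiple
 edges disappear automatically. The result is isomorphic to the contraction
 with a fresh vertex.\<close>
definition contract_edge :: "'a graph \<Rightarrow> 'a \<Rightarrow> 'a \<Rightarrow> 'a graph" where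
  "contract_edge G u v =
     (let f = (\<lambda>x. if x = v then u else x)
      in (fst G - {v}, {f ` e | e. e \<in> snd G \<and> card (f ` e) = 2}))"

inductive contracts_to :: "'a graph \<Rightarrow> 'a graph \<Rightarrow> bool" where
  refl: "contracts_to G G"
| step: "{u, v} \<in> snd G \<Longrightarrow> u \<noteq> v \<Longrightarrow> contracts_to (contract_edge G u v) H
           \<Longrightarrow> contracts_to G H"

definition graph_iso :: "'a graph \<Rightarrow> 'b graph \<Rightarrow> bool" where
  "graph_iso G H \<longleftrightarrow> (\<exists>f. bij_betw f (fst G) (fst H) \<and>
     (\<forall>x\<in>fst G. \<forall>y\<in>fst G. {x, y} \<in> snd G \<longleftrightarrow> {f x, f y} \<in> snd H))"

definition has_contraction :: "'a graph \<Rightarrow> 'b graph \<Rightarrow> bool" where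
  "has_contraction G H \<longleftrightarrow> (\<exists>G'. contracts_to G G' \<and> graph_iso G' H)"

definition path_graph :: "nat \<Rightarrow> nat graph" where
  "path_graph k = ({0..<k}, {{i, Suc i} | i. Suc i < k})"

definition two_colourable :: "'q set \<Rightarrow> (nat \<Rightarrow> 'q set) \<Rightarrow> nat \<Rightarrow> bool" where
  "two_colourable Q S n \<longleftrightarrow> (\<exists>Q1 Q2. Q1 \<union> Q2 = Q \<and> Q1 \<inter> Q2 = {} \<and>
     (\<forall>j\<in>{1..n}. Q1 \<inter> S j \<noteq> {} \<and> Q2 \<inter> S j \<noteq> {}))"

datatype 'q gvert = Qv 'q | Sv nat | Sp nat | Qij 'q nat | Qstar | U1 | U2 | Vv | Wv

definition Qprime :: "(nat \<Rightarrow> 'q set) \<Rightarrow> nat \<Rightarrow> 'q gvert set" where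
  "Qprime S n = {Qij q j | q j. j \<in> {1..n} \<and> q \<in> S j}"

definition constr_graph :: "'q set \<Rightarrow> (nat \<Rightarrow> 'q set) \<Rightarrow> nat \<Rightarrow> 'q gvert graph" where
  "constr_graph Q S n =
    (Qv ` Q \<union> Sv ` {1..n} \<union> Sp ` {1..n} \<union> Qprime S n \<union> {Qstar, U1, U2, Vv, Wv},
     {{Qij q j, Qv q} | q j. j \<in> {1..n} \<and> q \<in> S j}
     \<union> {{Qij q j, Sv j} | q j. j \<in> {1..n} \<and> q \<in> S j}
     \<union> {{Qv q, Sp j} | q j. j \<in> {1..n} \<and> q \<in> S j}
     \<union> {{Sv j, Sp k} | j k. j \<in> {1..n} \<and> k \<in> {1..n}}
     \<union> {{Qstar, U1}, {Qstar, U2}}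
     \<union> {{Qstar, x} | x. x \<in> Qprime S n}
     \<union> {{U1, Sv j} | j. j \<in> {1..n}}
     \<union> {{U2, Sv j} | j. j \<in> {1..n}}
     \<union> {{U1, Vv}, {U2, Vv}}
     \<union> {{Wv, Sp j} | j. j \<in> {1..n}})"

end

theory Submission
  imports Defs
begin

definition wfg :: "'a graph \<Rightarrow> bool" where
  "wfg G \<longleftrightarrow> finite (fst G) \<and> (\<forall>e\<in>snd G. \<exists>x y. x \<noteq> y \<and> x \<in> fst G \<and> y \<in> fst G \<and> e = {x, y})"

definition crel :: "'a set set \<Rightarrow> 'a set \<Rightarrow> ('a \<times> 'a) set" where
  "crel E A = {(x, y). {x, y} \<in> E \<and> x \<in> A \<and> y \<in> A}"

definition conn :: "'a set set \<Rightarrow> 'a set \<Rightarrow> bool" where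
  "conn E A \<longleftrightarrow> (\<forall>x\<in>A. \<forall>y\<in>A. (x, y) \<in> (crel E A)\<^sup>*)"

definition cf :: "'a \<Rightarrow> 'a \<Rightarrow> 'a \<Rightarrow> 'a" where
  "cf u v x = (if x = v then u else x)"

lemma contract_fst: "fst (contract_edge G u v) = fst G - {v}"
  by (simp add: contract_edge_def Let_def)

lemma contract_snd: "snd (contract_edge G u v) = {cf u v ` e | e. e \<in> snd G \<and> card (cf u v ` e) = 2}"
  by (simp add: contract_edge_def Let_def cf_def)

lemma wfg_edge: "wfg G \<Longrightarrow> {x, y} \<in> snd G \<Longrightarrow> x \<in> fst G \<and> y \<in> fst G \<and> x \<noteq> y"
  unfolding wfg_def by (metis doubleton_eq_iff insert_absorb2)

lemma card2_img: "card (f ` {x, y}) = 2 \<longleftrightarrow> f x \<noteq> f y"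
  by (cases "f x = f y") auto

lemma contract_wf:
  assumes "wfg G" "{u, v} \<in> snd G" "u \<noteq> v"
  shows "wfg (contract_edge G u v)"
proof -
  have uv: "u \<in> fst G" "v \<in> fst G" using wfg_edge[OF assms(1,2)] by auto
  show ?thesis unfolding wfg_def contract_fst contract_snd
  proof (intro conjI ballI)
    show "finite (fst G - {v})" using assms(1) by (simp add: wfg_def)
  next
    fix e' assume "e' \<in> {cf u v ` e |e. e \<in> snd G \<and> card (cf u v ` e) = 2}"
    then obtain e where e: "e \<in> snd G" "card (cf u v ` e) = 2" "e' = cf u v ` e" by blast
    then obtain x y where xy: "x \<noteq> y" "x \<in> fst G" "y \<in> fst G" "e = {x, y}"
      using assms(1) unfolding wfg_def by blast
    have "cf u v x \<noteq> cf u v y" using e(2) xy(4) card2_img by metis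
    moreover have "cf u v x \<in> fst G - {v}" "cf u v y \<in> fst G - {v}"
      using xy uv assms(3) by (auto simp: cf_def)
    ultimately show "\<exists>x y. x \<noteq> y \<and> x \<in> fst G - {v} \<and> y \<in> fst G - {v} \<and> e' = {x, y}"
      using e(3) xy(4) by auto
  qed
qed

lemma crel_sym: "(x, y) \<in> crel E A \<Longrightarrow> (y, x) \<in> crel E A"
  by (auto simp: crel_def insert_commute)

lemma crel_rtr_sym: "(x, y) \<in> (crel E A)\<^sup>* \<Longrightarrow> (y, x) \<in> (crel E A)\<^sup>*"
proof (induction rule: rtrancl_induct)
  case base then show ?case by simp
next
  case (step y z)
  then show ?case by (meson converse_rtrancl_into_rtrancl crel_sym)
qed

lemma conn_hub:
  assumes "\<And>x. x \<in> A \<Longrightarrow> (x, h) \<in> (crel E A)\<^sup>*"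
  shows "conn E A"
  unfolding conn_def using assms crel_rtr_sym by (meson rtrancl_trans)

lemma conn_nbr:
  assumes "conn E A" "x \<in> A" "y \<in> A" "x \<noteq> y"
  shows "\<exists>z. {x, z} \<in> E \<and> z \<in> A"
proof -
  have "(x, y) \<in> (crel E A)\<^sup>*" using assms unfolding conn_def by blast
  then obtain z where "(x, z) \<in> crel E A" using assms(4) by (metis converse_rtranclE)
  then show ?thesis by (auto simp: crel_def)
qed

lemma rtr_closed:
  assumes "(x, y) \<in> R\<^sup>*" "x \<in> C" "\<And>a b. (a, b) \<in> R \<Longrightarrow> a \<in> C \<Longrightarrow> b \<in> C"
  shows "y \<in> C"
  using assms(1,2) by (induction rule: rtrancl_induct) (auto intro: assms(3))

lemma cf_cases: "cf u v x = x \<or> (x = v \<and> cf u v x = u)"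
  by (auto simp: cf_def)

lemma witness_of_contraction:
  assumes "contracts_to G H" "wfg G"
  shows "\<exists>\<phi>. (\<forall>x\<in>fst G. \<phi> x \<in> fst H) \<and> (\<forall>y\<in>fst H. \<exists>x\<in>fst G. \<phi> x = y)
     \<and> (\<forall>x y. {x, y} \<in> snd G \<longrightarrow> \<phi> x = \<phi> y \<or> {\<phi> x, \<phi> y} \<in> snd H)
     \<and> (\<forall>y\<in>fst H. conn (snd G) {x\<in>fst G. \<phi> x = y})"
  using assms
proof (induction rule: contracts_to.induct)
  case (refl G)
  show ?case
  proof (intro exI[of _ id] conjI ballI allI impI)
    fix y assume y: "y \<in> fst G"
    have "{x \<in> fst G. id x = y} = {y}" using y by auto
    then show "conn (snd G) {x \<in> fst G. id x = y}" by (simp add: conn_def)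
  qed auto
next
  case (step u v G H)
  let ?G1 = "contract_edge G u v"
  let ?f = "cf u v"
  have wf1: "wfg ?G1" using contract_wf[OF step.prems step.hyps(1,2)] .
  from step.IH[OF wf1] obtain \<phi>1 where
    p1: "\<forall>x\<in>fst ?G1. \<phi>1 x \<in> fst H" and
    p2: "\<forall>y\<in>fst H. \<exists>x\<in>fst ?G1. \<phi>1 x = y" and
    p3: "\<forall>x y. {x, y} \<in> snd ?G1 \<longrightarrow> \<phi>1 x = \<phi>1 y \<or> {\<phi>1 x, \<phi>1 y} \<in> snd H" and
    p4: "\<forall>y\<in>fst H. conn (snd ?G1) {x\<in>fst ?G1. \<phi>1 x = y}" by blast
  have uv: "u \<in> fst G" "v \<in> fst G" using wfg_edge[OF step.prems step.hyps(1)] by auto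
  have fmap: "\<And>x. x \<in> fst G \<Longrightarrow> ?f x \<in> fst ?G1"
    using uv step.hyps(2) by (auto simp: contract_fst cf_def)
  have fid: "\<And>x. x \<in> fst ?G1 \<Longrightarrow> ?f x = x" by (auto simp: contract_fst cf_def)
  have edge1: "\<And>x y. {x, y} \<in> snd G \<Longrightarrow> ?f x \<noteq> ?f y \<Longrightarrow> {?f x, ?f y} \<in> snd ?G1"
  proof -
    fix x y assume "{x, y} \<in> snd G" "?f x \<noteq> ?f y"
    moreover have "card (?f ` {x, y}) = 2" using card2_img[of ?f x y] \<open>?f x \<noteq> ?f y\<close> by simp
    ultimately have "?f ` {x, y} \<in> {cf u v ` e |e. e \<in> snd G \<and> card (cf u v ` e) = 2}"
      by blast
    then show "{?f x, ?f y} \<in> snd ?G1" by (simp add: contract_snd)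
  qed
  show ?case
  proof (intro exI[of _ "\<phi>1 \<circ> ?f"] conjI ballI allI impI)
    fix x assume "x \<in> fst G" then show "(\<phi>1 \<circ> ?f) x \<in> fst H" using fmap p1 by auto
  next
    fix y assume "y \<in> fst H"
    then obtain x where "x \<in> fst ?G1" "\<phi>1 x = y" using p2 by blast
    then have "x \<in> fst G" "(\<phi>1 \<circ> ?f) x = y" using fid by (auto simp: contract_fst)
    then show "\<exists>x\<in>fst G. (\<phi>1 \<circ> ?f) x = y" by blast
  next
    fix x y assume "{x, y} \<in> snd G"
    then show "(\<phi>1 \<circ> ?f) x = (\<phi>1 \<circ> ?f) y \<or> {(\<phi>1 \<circ> ?f) x, (\<phi>1 \<circ> ?f) y} \<in> snd H"
      using edge1 p3 by (cases "?f x = ?f y") auto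
  next
    fix y assume yH: "y \<in> fst H"
    let ?B = "{x \<in> fst G. (\<phi>1 \<circ> ?f) x = y}"
    let ?B1 = "{x \<in> fst ?G1. \<phi>1 x = y}"
    have c1: "conn (snd ?G1) ?B1" using p4 yH by blast
    have base0: "(p', q') \<in> (crel (snd G) ?B)\<^sup>*"
      if "p' \<in> ?B" "q' \<in> ?B" "?f p' = ?f q'" for p' q'
    proof -
      have uvB: "u \<in> ?B \<Longrightarrow> v \<in> ?B \<Longrightarrow> (u, v) \<in> crel (snd G) ?B \<and> (v, u) \<in> crel (snd G) ?B"
        using step.hyps(1) by (auto simp: crel_def insert_commute)
      show ?thesis
      proof (cases "p' = q'")
        case True then show ?thesis by simp
      next
        case False
        then have "(p' = u \<and> q' = v) \<or> (p' = v \<and> q' = u)"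
          using that(3) step.hyps(2) by (auto simp: cf_def split: if_splits)
        then show ?thesis using that(1,2) uvB by auto
      qed
    qed
    have lift: "\<And>p q. (p, q) \<in> (crel (snd ?G1) ?B1)\<^sup>* \<Longrightarrow>
        \<forall>p' q'. p' \<in> ?B \<longrightarrow> q' \<in> ?B \<longrightarrow> ?f p' = p \<longrightarrow> ?f q' = q \<longrightarrow> (p', q') \<in> (crel (snd G) ?B)\<^sup>*"
    proof -
      fix p q assume "(p, q) \<in> (crel (snd ?G1) ?B1)\<^sup>*"
      then show "\<forall>p' q'. p' \<in> ?B \<longrightarrow> q' \<in> ?B \<longrightarrow> ?f p' = p \<longrightarrow> ?f q' = q \<longrightarrow> (p', q') \<in> (crel (snd G) ?B)\<^sup>*"
      proof (induction rule: rtrancl_induct)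
        case base then show ?case using base0 by auto
      next
        case (step q r)
        show ?case
        proof (intro allI impI)
          fix p' r' assume h: "p' \<in> ?B" "r' \<in> ?B" "?f p' = p" "?f r' = r"
          from step.hyps(2) have qr: "{q, r} \<in> snd ?G1" "q \<in> ?B1" "r \<in> ?B1" by (auto simp: crel_def)
          then obtain e where e: "e \<in> snd G" "card (?f ` e) = 2" "{q, r} = ?f ` e"
            by (auto simp: contract_snd)
          then obtain a b where ab: "a \<noteq> b" "a \<in> fst G" "b \<in> fst G" "e = {a, b}"
            using \<open>wfg G\<close> unfolding wfg_def by blast
          have "(?f a = q \<and> ?f b = r) \<or> (?f a = r \<and> ?f b = q)"
            using e(3) ab(4) by (auto simp: doubleton_eq_iff)
          then obtain a' b' where a'b': "{a', b'} = e" "?f a' = q" "?f b' = r"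
            using ab(4) by (metis insert_commute)
          have a'b'G: "a' \<in> fst G" "b' \<in> fst G" using a'b'(1) ab by auto
          have a'B: "a' \<in> ?B" using a'b'G a'b'(2) qr(2) by auto
          have b'B: "b' \<in> ?B" using a'b'G a'b'(3) qr(3) by auto
          have 1: "(p', a') \<in> (crel (snd G) ?B)\<^sup>*" using step.IH h a'B a'b'(2) by blast
          have 2: "(a', b') \<in> crel (snd G) ?B" using a'B b'B a'b'(1) e(1) by (auto simp: crel_def)
          have 3: "(b', r') \<in> (crel (snd G) ?B)\<^sup>*" using base0 b'B h a'b'(3) by auto
          show "(p', r') \<in> (crel (snd G) ?B)\<^sup>*" using 1 2 3
            by (meson rtrancl_into_rtrancl rtrancl_trans)
        qed
      qed
    qed
    show "conn (snd G) ?B" unfolding conn_def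
    proof (intro ballI)
      fix a b assume ab: "a \<in> ?B" "b \<in> ?B"
      have "?f a \<in> ?B1" "?f b \<in> ?B1" using ab fmap by auto
      then have "(?f a, ?f b) \<in> (crel (snd ?G1) ?B1)\<^sup>*" using c1 unfolding conn_def by blast
      then show "(a, b) \<in> (crel (snd G) ?B)\<^sup>*" using lift ab by blast
    qed
  qed
qed

definition adjB :: "'a graph \<Rightarrow> ('a \<Rightarrow> 'b) \<Rightarrow> 'b \<Rightarrow> 'b \<Rightarrow> bool" where
  "adjB G \<phi> c d \<longleftrightarrow> (\<exists>a\<in>fst G. \<exists>b\<in>fst G. {a, b} \<in> snd G \<and> \<phi> a = c \<and> \<phi> b = d)"

lemma rtr_map:
  assumes "(p, q) \<in> R\<^sup>*" "\<And>a b. (a, b) \<in> R \<Longrightarrow> f a = f b \<or> (f a, f b) \<in> R'"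
  shows "(f p, f q) \<in> R'\<^sup>*"
  using assms(1)
proof (induction rule: rtrancl_induct)
  case base then show ?case by simp
next
  case (step y z)
  then show ?case using assms(2)[of y z] by (metis rtrancl.rtrancl_into_rtrancl)
qed

lemma contraction_of_witness:
  assumes "wfg G" "\<forall>c\<in>\<phi> ` fst G. conn (snd G) {x\<in>fst G. \<phi> x = c}"
  shows "\<exists>G'. contracts_to G G' \<and> fst G' \<subseteq> fst G \<and> inj_on \<phi> (fst G') \<and> \<phi> ` fst G' = \<phi> ` fst G
     \<and> (\<forall>x\<in>fst G'. \<forall>y\<in>fst G'. {x, y} \<in> snd G' \<longleftrightarrow> (\<phi> x \<noteq> \<phi> y \<and> adjB G \<phi> (\<phi> x) (\<phi> y)))"
  using assms
proof (induction "card (fst G)" arbitrary: G rule: less_induct)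
  case less
  show ?case
  proof (cases "inj_on \<phi> (fst G)")
    case True
    show ?thesis
    proof (intro exI[of _ G] conjI ballI contracts_to.refl subset_refl True refl)
      fix x y assume xy: "x \<in> fst G" "y \<in> fst G"
      show "{x, y} \<in> snd G \<longleftrightarrow> (\<phi> x \<noteq> \<phi> y \<and> adjB G \<phi> (\<phi> x) (\<phi> y))"
      proof
        assume e: "{x, y} \<in> snd G"
        then have "x \<noteq> y" using wfg_edge[OF less.prems(1)] by blast
        then show "\<phi> x \<noteq> \<phi> y \<and> adjB G \<phi> (\<phi> x) (\<phi> y)"
          using True xy e unfolding adjB_def inj_on_def by blast
      next
        assume "\<phi> x \<noteq> \<phi> y \<and> adjB G \<phi> (\<phi> x) (\<phi> y)"
        then obtain a b where ab: "a \<in> fst G" "b \<in> fst G" "{a, b} \<in> snd G" "\<phi> a = \<phi> x" "\<phi> b = \<phi> y"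
          unfolding adjB_def by blast
        then have "a = x" "b = y" using True xy unfolding inj_on_def by blast+
        then show "{x, y} \<in> snd G" using ab by simp
      qed
    qed simp
  next
    case False
    then obtain x y where xy: "x \<in> fst G" "y \<in> fst G" "x \<noteq> y" "\<phi> x = \<phi> y"
      unfolding inj_on_def by blast
    let ?B = "{w\<in>fst G. \<phi> w = \<phi> x}"
    have "conn (snd G) ?B" using less.prems(2) xy(1) by blast
    then obtain z where z: "{x, z} \<in> snd G" "z \<in> ?B"
      using conn_nbr[of "snd G" ?B x y] xy by auto
    have xz: "x \<noteq> z" "z \<in> fst G" using wfg_edge[OF less.prems(1) z(1)] by auto
    have phz: "\<phi> z = \<phi> x" using z by auto
    let ?G1 = "contract_edge G x z"
    let ?f = "cf x z"
    have wf1: "wfg ?G1" using contract_wf[OF less.prems(1) z(1) xz(1)] .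
    have fin: "finite (fst G)" using less.prems(1) by (simp add: wfg_def)
    have card1: "card (fst ?G1) < card (fst G)"
      using fin xz(2) by (simp add: contract_fst) (metis Suc_pred card_gt_0_iff empty_iff lessI)
    have phf: "\<And>w. \<phi> (?f w) = \<phi> w" using phz by (simp add: cf_def)
    have fmap: "\<And>w. w \<in> fst G \<Longrightarrow> ?f w \<in> fst ?G1"
      using xy(1) xz by (auto simp: contract_fst cf_def)
    have fid: "\<And>w. w \<in> fst ?G1 \<Longrightarrow> ?f w = w" by (auto simp: contract_fst cf_def)
    have edge1: "\<And>a b. {a, b} \<in> snd G \<Longrightarrow> ?f a \<noteq> ?f b \<Longrightarrow> {?f a, ?f b} \<in> snd ?G1"
    proof -
      fix a b assume "{a, b} \<in> snd G" "?f a \<noteq> ?f b"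
      moreover have "card (?f ` {a, b}) = 2" using card2_img[of ?f a b] \<open>?f a \<noteq> ?f b\<close> by simp
      ultimately have "?f ` {a, b} \<in> {cf x z ` e |e. e \<in> snd G \<and> card (cf x z ` e) = 2}"
        by blast
      then show "{?f a, ?f b} \<in> snd ?G1" by (simp add: contract_snd)
    qed
    have img: "\<phi> ` fst ?G1 = \<phi> ` fst G"
    proof
      show "\<phi> ` fst ?G1 \<subseteq> \<phi> ` fst G" by (auto simp: contract_fst)
      show "\<phi> ` fst G \<subseteq> \<phi> ` fst ?G1"
      proof
        fix c assume "c \<in> \<phi> ` fst G"
        then obtain w where "w \<in> fst G" "c = \<phi> w" by blast
        then show "c \<in> \<phi> ` fst ?G1" using fmap phf by (metis image_eqI)
      qed
    qed
    have conn1: "\<forall>c\<in>\<phi> ` fst ?G1. conn (snd ?G1) {w\<in>fst ?G1. \<phi> w = c}"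
    proof
      fix c assume c: "c \<in> \<phi> ` fst ?G1"
      let ?C = "{w\<in>fst G. \<phi> w = c}"
      let ?C1 = "{w\<in>fst ?G1. \<phi> w = c}"
      have cC: "conn (snd G) ?C" using less.prems(2) c img by blast
      show "conn (snd ?G1) ?C1" unfolding conn_def
      proof (intro ballI)
        fix a b assume ab: "a \<in> ?C1" "b \<in> ?C1"
        have "a \<in> ?C" "b \<in> ?C" using ab by (auto simp: contract_fst)
        then have "(a, b) \<in> (crel (snd G) ?C)\<^sup>*" using cC unfolding conn_def by blast
        then have "(?f a, ?f b) \<in> (crel (snd ?G1) ?C1)\<^sup>*"
        proof (rule rtr_map)
          fix p q assume "(p, q) \<in> crel (snd G) ?C"
          then have pq: "{p, q} \<in> snd G" "p \<in> ?C" "q \<in> ?C" by (auto simp: crel_def)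
          show "?f p = ?f q \<or> (?f p, ?f q) \<in> crel (snd ?G1) ?C1"
          proof (cases "?f p = ?f q")
            case False
            then have "{?f p, ?f q} \<in> snd ?G1" using edge1 pq(1) by blast
            moreover have "?f p \<in> ?C1" "?f q \<in> ?C1" using pq fmap phf by auto
            ultimately show ?thesis by (auto simp: crel_def)
          qed simp
        qed
        then show "(a, b) \<in> (crel (snd ?G1) ?C1)\<^sup>*" using ab fid by auto
      qed
    qed
    have adj_eq: "adjB ?G1 \<phi> c d = adjB G \<phi> c d" if "c \<noteq> d" for c d
    proof
      assume "adjB ?G1 \<phi> c d"
      then obtain a b where ab: "a \<in> fst ?G1" "b \<in> fst ?G1" "{a, b} \<in> snd ?G1" "\<phi> a = c" "\<phi> b = d"
        unfolding adjB_def by blast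
      then obtain e where e: "e \<in> snd G" "{a, b} = ?f ` e" by (auto simp: contract_snd)
      then obtain a' b' where ab': "a' \<in> fst G" "b' \<in> fst G" "e = {a', b'}"
        using less.prems(1) unfolding wfg_def by blast
      have "(?f a' = a \<and> ?f b' = b) \<or> (?f a' = b \<and> ?f b' = a)"
        using e(2) ab'(3) by (auto simp: doubleton_eq_iff)
      then show "adjB G \<phi> c d" unfolding adjB_def
        using ab' e(1) ab(4,5) phf by (metis insert_commute)
    next
      assume "adjB G \<phi> c d"
      then obtain a b where ab: "a \<in> fst G" "b \<in> fst G" "{a, b} \<in> snd G" "\<phi> a = c" "\<phi> b = d"
        unfolding adjB_def by blast
      have "?f a \<noteq> ?f b" using ab(4,5) that phf by metis
      then have "{?f a, ?f b} \<in> snd ?G1" using edge1 ab(3) by blast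
      then show "adjB ?G1 \<phi> c d" unfolding adjB_def using fmap ab phf by metis
    qed
    obtain G' where G': "contracts_to ?G1 G'" "fst G' \<subseteq> fst ?G1" "inj_on \<phi> (fst G')"
       "\<phi> ` fst G' = \<phi> ` fst ?G1"
       "\<forall>x\<in>fst G'. \<forall>y\<in>fst G'. {x, y} \<in> snd G' \<longleftrightarrow> (\<phi> x \<noteq> \<phi> y \<and> adjB ?G1 \<phi> (\<phi> x) (\<phi> y))"
      using less.hyps[OF card1 wf1 conn1] by blast
    show ?thesis
    proof (intro exI[of _ G'] conjI)
      show "contracts_to G G'" using contracts_to.step[OF z(1) xz(1) G'(1)] .
      show "fst G' \<subseteq> fst G" using G'(2) by (auto simp: contract_fst)
      show "inj_on \<phi> (fst G')" by (rule G'(3))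
      show "\<phi> ` fst G' = \<phi> ` fst G" using G'(4) img by simp
      show "\<forall>x\<in>fst G'. \<forall>y\<in>fst G'. {x, y} \<in> snd G' \<longleftrightarrow> (\<phi> x \<noteq> \<phi> y \<and> adjB G \<phi> (\<phi> x) (\<phi> y))"
        using G'(5) adj_eq by blast
    qed
  qed
qed

locale hg =
  fixes Q :: "'q set" and S :: "nat \<Rightarrow> 'q set" and n :: nat
  assumes finQ: "finite Q" and n2: "n \<ge> 2"
    and Ssub: "\<forall>j\<in>{1..n}. S j \<noteq> {} \<and> S j \<subseteq> Q" and Sn: "S n = Q"
begin

abbreviation "V \<equiv> fst (constr_graph Q S n)"
abbreviation "E \<equiv> snd (constr_graph Q S n)"

lemma V_Qv[simp]: "Qv q \<in> V \<longleftrightarrow> q \<in> Q" by (auto simp: constr_graph_def Qprime_def)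
lemma V_Sv[simp]: "Sv j \<in> V \<longleftrightarrow> j \<in> {1..n}" by (auto simp: constr_graph_def Qprime_def)
lemma V_Sp[simp]: "Sp j \<in> V \<longleftrightarrow> j \<in> {1..n}" by (auto simp: constr_graph_def Qprime_def)
lemma V_Qij[simp]: "Qij q j \<in> V \<longleftrightarrow> j \<in> {1..n} \<and> q \<in> S j" by (auto simp: constr_graph_def Qprime_def)
lemma V_oth[simp]: "Qstar \<in> V" "U1 \<in> V" "U2 \<in> V" "Vv \<in> V" "Wv \<in> V" by (auto simp: constr_graph_def)

lemma n_in: "n \<in> {1..n}" using n2 by auto
lemma one_in: "1 \<in> {1..n}" using n2 by auto

lemma E_cases:
  assumes "e \<in> E"
  obtains (QQ) q j where "j \<in> {1..n}" "q \<in> S j" "e = {Qij q j, Qv q}"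
  | (QS) q j where "j \<in> {1..n}" "q \<in> S j" "e = {Qij q j, Sv j}"
  | (QSp) q j where "j \<in> {1..n}" "q \<in> S j" "e = {Qv q, Sp j}"
  | (SSp) j k where "j \<in> {1..n}" "k \<in> {1..n}" "e = {Sv j, Sp k}"
  | (sU1) "e = {Qstar, U1}"
  | (sU2) "e = {Qstar, U2}"
  | (sQ) q j where "j \<in> {1..n}" "q \<in> S j" "e = {Qstar, Qij q j}"
  | (U1S) j where "j \<in> {1..n}" "e = {U1, Sv j}"
  | (U2S) j where "j \<in> {1..n}" "e = {U2, Sv j}"
  | (U1V) "e = {U1, Vv}"
  | (U2V) "e = {U2, Vv}"
  | (WSp) j where "j \<in> {1..n}" "e = {Wv, Sp j}"
  using assms unfolding constr_graph_def snd_conv Un_iff Qprime_def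
  apply (elim disjE)
  apply (elim CollectE exE conjE, rule QQ; assumption)
  apply (elim CollectE exE conjE, rule QS; assumption)
  apply (elim CollectE exE conjE, rule QSp; assumption)
  apply (elim CollectE exE conjE, rule SSp; assumption)
  apply (elim insertE, rule sU1, assumption, rule sU2, assumption, simp)
  apply (elim CollectE exE conjE, rule sQ, assumption, assumption, simp)
  apply (elim CollectE exE conjE, rule U1S; assumption)
  apply (elim CollectE exE conjE, rule U2S; assumption)
  apply (elim insertE, rule U1V, assumption, rule U2V, assumption, simp)
  apply (elim CollectE exE conjE, rule WSp; assumption)
  done

lemma eQQ: assumes "j \<in> {1..n}" "q \<in> S j" shows "{Qij q j, Qv q} \<in> E"
proof -
  have "{Qij q j, Qv q} \<in> {{Qij q j, Qv q} | q j. j \<in> {1..n} \<and> q \<in> S j}" using assms by blast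
  then show ?thesis unfolding constr_graph_def snd_conv by (simp only: Un_iff) (iprover intro: disjI1 disjI2)
qed
lemma eQS: assumes "j \<in> {1..n}" "q \<in> S j" shows "{Qij q j, Sv j} \<in> E"
proof -
  have "{Qij q j, Sv j} \<in> {{Qij q j, Sv j} | q j. j \<in> {1..n} \<and> q \<in> S j}" using assms by blast
  then show ?thesis unfolding constr_graph_def snd_conv by (simp only: Un_iff) (iprover intro: disjI1 disjI2)
qed
lemma eQSp: assumes "j \<in> {1..n}" "q \<in> S j" shows "{Qv q, Sp j} \<in> E"
proof -
  have "{Qv q, Sp j} \<in> {{Qv q, Sp j} | q j. j \<in> {1..n} \<and> q \<in> S j}" using assms by blast
  then show ?thesis unfolding constr_graph_def snd_conv by (simp only: Un_iff) (iprover intro: disjI1 disjI2)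
qed
lemma eSSp: assumes "j \<in> {1..n}" "k \<in> {1..n}" shows "{Sv j, Sp k} \<in> E"
proof -
  have "{Sv j, Sp k} \<in> {{Sv j, Sp k} | j k. j \<in> {1..n} \<and> k \<in> {1..n}}" using assms by blast
  then show ?thesis unfolding constr_graph_def snd_conv by (simp only: Un_iff) (iprover intro: disjI1 disjI2)
qed
lemma eSU1: "{Qstar, U1} \<in> E"
proof -
  have "{Qstar, U1} \<in> {{Qstar, U1}, {Qstar, U2}}" by (rule insertI1)
  then show ?thesis unfolding constr_graph_def snd_conv by (simp only: Un_iff) (iprover intro: disjI1 disjI2)
qed
lemma eSU2: "{Qstar, U2} \<in> E"
proof -
  have "{Qstar, U2} \<in> {{Qstar, U1}, {Qstar, U2}}" by (rule insertI2, rule insertI1)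
  then show ?thesis unfolding constr_graph_def snd_conv by (simp only: Un_iff) (iprover intro: disjI1 disjI2)
qed
lemma eQs: assumes "j \<in> {1..n}" "q \<in> S j" shows "{Qstar, Qij q j} \<in> E"
proof -
  have "Qij q j \<in> Qprime S n" using assms unfolding Qprime_def by blast
  then have "{Qstar, Qij q j} \<in> {{Qstar, x} | x. x \<in> Qprime S n}" by blast
  then show ?thesis unfolding constr_graph_def snd_conv by (simp only: Un_iff) (iprover intro: disjI1 disjI2)
qed
lemma eU1S: assumes "j \<in> {1..n}" shows "{U1, Sv j} \<in> E"
proof -
  have "{U1, Sv j} \<in> {{U1, Sv j} | j. j \<in> {1..n}}" using assms by blast
  then show ?thesis unfolding constr_graph_def snd_conv by (simp only: Un_iff) (iprover intro: disjI1 disjI2)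
qed
lemma eU2S: assumes "j \<in> {1..n}" shows "{U2, Sv j} \<in> E"
proof -
  have "{U2, Sv j} \<in> {{U2, Sv j} | j. j \<in> {1..n}}" using assms by blast
  then show ?thesis unfolding constr_graph_def snd_conv by (simp only: Un_iff) (iprover intro: disjI1 disjI2)
qed
lemma eU1V: "{U1, Vv} \<in> E"
proof -
  have "{U1, Vv} \<in> {{U1, Vv}, {U2, Vv}}" by (rule insertI1)
  then show ?thesis unfolding constr_graph_def snd_conv by (simp only: Un_iff) (iprover intro: disjI1 disjI2)
qed
lemma eU2V: "{U2, Vv} \<in> E"
proof -
  have "{U2, Vv} \<in> {{U1, Vv}, {U2, Vv}}" by (rule insertI2, rule insertI1)
  then show ?thesis unfolding constr_graph_def snd_conv by (simp only: Un_iff) (iprover intro: disjI1 disjI2)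
qed
lemma eWSp: assumes "j \<in> {1..n}" shows "{Wv, Sp j} \<in> E"
proof -
  have "{Wv, Sp j} \<in> {{Wv, Sp j} | j. j \<in> {1..n}}" using assms by blast
  then show ?thesis unfolding constr_graph_def snd_conv by (simp only: Un_iff) (iprover intro: disjI1 disjI2)
qed

lemma nbr_U1: "{U1, z} \<in> E \<Longrightarrow> z = Qstar \<or> z = Vv \<or> (\<exists>j. z = Sv j)"
  by (erule E_cases) (auto simp: doubleton_eq_iff)
lemma nbr_Sp: "{Sp j, z} \<in> E \<Longrightarrow> z = Wv \<or> (\<exists>k. z = Sv k) \<or> (\<exists>q. z = Qv q \<and> q \<in> S j)"
  by (erule E_cases) (auto simp: doubleton_eq_iff)
lemma nbr_Sv: "{Sv j, z} \<in> E \<Longrightarrow> z = U1 \<or> z = U2 \<or> (\<exists>k. z = Sp k) \<or> (\<exists>q. z = Qij q j)"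
  by (erule E_cases) (auto simp: doubleton_eq_iff)
lemma nbr_Qij: "{Qij q j, z} \<in> E \<Longrightarrow> z = Qstar \<or> z = Qv q \<or> z = Sv j"
  by (erule E_cases) (auto simp: doubleton_eq_iff)

lemma finV: "finite V"
proof -
  have "Qprime S n \<subseteq> (\<lambda>(q, j). Qij q j) ` (Q \<times> {1..n})"
  proof
    fix x assume "x \<in> Qprime S n"
    then obtain q j where "x = Qij q j" "j \<in> {1..n}" "q \<in> S j" unfolding Qprime_def by blast
    moreover then have "q \<in> Q" using Ssub by blast
    ultimately show "x \<in> (\<lambda>(q, j). Qij q j) ` (Q \<times> {1..n})" by force
  qed
  then have "finite (Qprime S n)" using finQ by (meson finite_SigmaI finite_atLeastAtMost finite_imageI finite_subset)
  then show ?thesis using finQ by (simp add: constr_graph_def)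
qed

lemma SQ: "Suc 0 \<le> j \<Longrightarrow> j \<le> n \<Longrightarrow> q \<in> S j \<Longrightarrow> q \<in> Q"
  using Ssub by auto

lemma ex2: "a \<noteq> b \<Longrightarrow> a \<in> A \<Longrightarrow> b \<in> A \<Longrightarrow> \<exists>x y. x \<noteq> y \<and> x \<in> A \<and> y \<in> A \<and> {a, b} = {x, y}"
  by blast

lemma wfG: "wfg (constr_graph Q S n)"
  unfolding wfg_def
proof (intro conjI ballI finV)
  fix e assume "e \<in> E"
  then show "\<exists>x y. x \<noteq> y \<and> x \<in> V \<and> y \<in> V \<and> e = {x, y}"
  proof (cases rule: E_cases)
  qed (auto intro!: ex2 intro: SQ)
qed

end

lemma path_edge: "{a, b} \<in> snd (path_graph k) \<longleftrightarrow> (b = Suc a \<and> b < k) \<or> (a = Suc b \<and> a < k)"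
  unfolding path_graph_def by (auto simp: doubleton_eq_iff)

lemma path_single: "{a} \<notin> snd (path_graph k)"
  unfolding path_graph_def by (auto simp: doubleton_eq_iff)

lemma rstep: "{a, b} \<in> E \<Longrightarrow> a \<in> B \<Longrightarrow> b \<in> B \<Longrightarrow> (b, h) \<in> (crel E B)\<^sup>* \<Longrightarrow> (a, h) \<in> (crel E B)\<^sup>*"
  by (rule converse_rtrancl_into_rtrancl) (auto simp: crel_def)

definition psiC :: "'q set \<Rightarrow> 'q gvert \<Rightarrow> nat" where
  "psiC Q1 x = (case x of Wv \<Rightarrow> 0 | Sp j \<Rightarrow> 1 | Qv q \<Rightarrow> (if q \<in> Q1 then 1 else 2) | Sv j \<Rightarrow> 2
     | Qij q j \<Rightarrow> 2 | Qstar \<Rightarrow> 3 | U1 \<Rightarrow> 3 | U2 \<Rightarrow> 3 | Vv \<Rightarrow> 4)"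

definition hubC :: "nat \<Rightarrow> nat \<Rightarrow> 'q gvert" where
  "hubC n c = (if c = 0 then Wv else if c = 1 then Sp n else if c = 2 then Sv n else if c = 3 then Qstar else Vv)"

context hg begin

lemma n_ge1[simp]: "Suc 0 \<le> n" using n2 by simp

lemma eflip: "{a, b} \<in> E \<Longrightarrow> {b, a} \<in> E" by (simp add: insert_commute)

lemma psiC_edge: "{x, y} \<in> E \<Longrightarrow> psiC Q1 x \<le> psiC Q1 y + 1 \<and> psiC Q1 y \<le> psiC Q1 x + 1"
  by (erule E_cases) (auto simp: doubleton_eq_iff psiC_def)

lemma psiC_range: "x \<in> V \<Longrightarrow> psiC Q1 x < 5"
  by (cases x) (auto simp: psiC_def)

context
  fixes Q1 Q2
  assumes col: "Q1 \<union> Q2 = Q" "Q1 \<inter> Q2 = {}" "\<forall>j\<in>{1..n}. Q1 \<inter> S j \<noteq> {} \<and> Q2 \<inter> S j \<noteq> {}"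
begin

abbreviation "psc \<equiv> psiC Q1"
abbreviation "bagc c \<equiv> {x \<in> V. psc x = c}"

lemma Sv_hub: assumes j: "j \<in> {1..n}" shows "(Sv j, Sv n) \<in> (crel E (bagc 2))\<^sup>*"
proof -
  obtain q where q: "q \<in> Q2" "q \<in> S j" using col(3) j by blast
  have qQ: "q \<in> Q" "q \<notin> Q1" using q col by auto
  have qn: "q \<in> S n" using qQ Sn by simp
  show ?thesis
    apply (rule rstep[OF eflip[OF eQS[OF j q(2)]]])
      apply (insert j, simp add: psiC_def)
     apply (insert j q, simp add: psiC_def)
    apply (rule rstep[OF eQQ[OF j q(2)]])
      apply (insert j q, simp add: psiC_def)
     apply (insert qQ, simp add: psiC_def)
    apply (rule rstep[OF eflip[OF eQQ[OF n_in qn]]])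
      apply (insert qQ, simp add: psiC_def)
     apply (insert n_in qn, simp add: psiC_def)
    apply (rule rstep[OF eQS[OF n_in qn]])
      apply (insert n_in qn, simp add: psiC_def)
     apply (insert n_in, simp add: psiC_def)
    apply simp
    done
qed

lemma to_hub: "x \<in> V \<Longrightarrow> (x, hubC n (psc x)) \<in> (crel E (bagc (psc x)))\<^sup>*"
proof (cases x)
  case (Qv q)
  assume "x \<in> V"
  then have qQ: "q \<in> Q" "q \<in> S n" using Qv Sn by auto
  show ?thesis
  proof (cases "q \<in> Q1")
    case True
    show ?thesis unfolding Qv
      apply (simp add: True psiC_def hubC_def)
      apply (rule rstep[OF eQSp[OF n_in qQ(2)]])
        apply (insert qQ True, simp add: psiC_def)
       apply (insert n_in, simp add: psiC_def)
      apply simp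
      done
  next
    case False
    show ?thesis unfolding Qv
      apply (simp add: False psiC_def hubC_def)
      apply (rule rstep[OF eflip[OF eQQ[OF n_in qQ(2)]]])
        apply (insert qQ False, simp add: psiC_def)
       apply (insert n_in qQ, simp add: psiC_def)
      apply (rule rstep[OF eQS[OF n_in qQ(2)]])
        apply (insert n_in qQ, simp add: psiC_def)
       apply (insert n_in, simp add: psiC_def)
      apply simp
      done
  qed
next
  case (Sv j)
  assume "x \<in> V"
  then have j: "j \<in> {1..n}" using Sv by auto
  show ?thesis unfolding Sv using Sv_hub[OF j] by (simp add: psiC_def hubC_def)
next
  case (Sp j)
  assume "x \<in> V"
  then have j: "j \<in> {1..n}" using Sp by auto
  obtain q where q: "q \<in> Q1" "q \<in> S j" using col(3) j by blast
  have qQ: "q \<in> Q" "q \<in> S n" using q col Sn by auto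
  show ?thesis unfolding Sp
    apply (simp add: psiC_def hubC_def)
    apply (rule rstep[OF eflip[OF eQSp[OF j q(2)]]])
      apply (insert j, simp add: psiC_def)
     apply (insert qQ q, simp add: psiC_def)
    apply (rule rstep[OF eQSp[OF n_in qQ(2)]])
      apply (insert qQ q, simp add: psiC_def)
     apply (insert n_in, simp add: psiC_def)
    apply simp
    done
next
  case (Qij q j)
  assume "x \<in> V"
  then have j: "j \<in> {1..n}" "q \<in> S j" using Qij by auto
  show ?thesis unfolding Qij
    apply (simp add: psiC_def hubC_def)
    apply (rule rstep[OF eQS[OF j]])
      apply (insert j, simp add: psiC_def)
     apply (insert j, simp add: psiC_def)
    using Sv_hub[OF j(1)] apply (simp add: psiC_def)
    done
next
  case Qstar then show ?thesis by (simp add: psiC_def hubC_def)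
next
  case U1
  show ?thesis unfolding U1
    apply (simp add: psiC_def hubC_def)
    apply (rule rstep[OF eflip[OF eSU1]])
      apply (simp add: psiC_def)
     apply (simp add: psiC_def)
    apply simp
    done
next
  case U2
  show ?thesis unfolding U2
    apply (simp add: psiC_def hubC_def)
    apply (rule rstep[OF eflip[OF eSU2]])
      apply (simp add: psiC_def)
     apply (simp add: psiC_def)
    apply simp
    done
next
  case Vv then show ?thesis by (simp add: psiC_def hubC_def)
next
  case Wv then show ?thesis by (simp add: psiC_def hubC_def)
qed

lemma bag_conn: "conn E (bagc c)"
proof (rule conn_hub[where h = "hubC n c"])
  fix x assume "x \<in> bagc c"
  then show "(x, hubC n c) \<in> (crel E (bagc c))\<^sup>*" using to_hub[of x] by auto
qed

lemma img: "psc ` V = {0..<5}"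
proof
  show "psc ` V \<subseteq> {0..<5}" using psiC_range by auto
  have "psc Wv = 0" "psc (Sp n) = 1" "psc (Sv n) = 2" "psc Qstar = 3" "psc Vv = 4"
    by (auto simp: psiC_def)
  moreover have "Sp n \<in> V" "Sv n \<in> V" using n_in by auto
  ultimately have "{0, 1, 2, 3, 4} \<subseteq> psc ` V" by (metis V_oth empty_subsetI image_eqI insert_subset)
  moreover have "{0..<5} = {0, 1, 2, 3, (4::nat)}" by auto
  ultimately show "{0..<5} \<subseteq> psc ` V" by simp
qed

lemma adj_iff: "c \<noteq> d \<Longrightarrow> c < 5 \<Longrightarrow> d < 5 \<Longrightarrow> adjB (constr_graph Q S n) psc c d \<longleftrightarrow> {c, d} \<in> snd (path_graph 5)"
proof -
  assume cd: "c \<noteq> d" "c < 5" "d < 5"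
  have adjs: "adjB (constr_graph Q S n) psc (psc a) (psc b) \<and> adjB (constr_graph Q S n) psc (psc b) (psc a)"
    if "{a, b} \<in> E" "a \<in> V" "b \<in> V" for a b
    using that eflip[OF that(1)] unfolding adjB_def by blast
  have key: "adjB (constr_graph Q S n) psc c' (c' + 1) \<and> adjB (constr_graph Q S n) psc (c' + 1) c'"
    if "c' < 4" for c'
  proof -
    have "c' = 0 \<or> c' = 1 \<or> c' = 2 \<or> c' = 3" using that by arith
    moreover have "adjB (constr_graph Q S n) psc 0 (0 + 1) \<and> adjB (constr_graph Q S n) psc (0 + 1) 0"
      using adjs[OF eWSp[OF n_in]] n_in by (simp add: psiC_def)
    moreover have "adjB (constr_graph Q S n) psc 1 (1 + 1) \<and> adjB (constr_graph Q S n) psc (1 + 1) 1"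
      using adjs[OF eflip[OF eSSp[OF n_in n_in]]] n_in by (simp add: psiC_def numeral_2_eq_2)
    moreover have "adjB (constr_graph Q S n) psc 2 (2 + 1) \<and> adjB (constr_graph Q S n) psc (2 + 1) 2"
      using adjs[OF eflip[OF eU1S[OF n_in]]] n_in by (simp add: psiC_def)
    moreover have "adjB (constr_graph Q S n) psc 3 (3 + 1) \<and> adjB (constr_graph Q S n) psc (3 + 1) 3"
      using adjs[OF eU1V] by (simp add: psiC_def)
    ultimately show ?thesis by (-, elim disjE) simp_all
  qed
  show ?thesis
  proof
    assume "adjB (constr_graph Q S n) psc c d"
    then obtain a b where "{a, b} \<in> E" "psc a = c" "psc b = d" unfolding adjB_def by blast
    then have "c \<le> d + 1" "d \<le> c + 1" using psiC_edge[of a b] by auto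
    then show "{c, d} \<in> snd (path_graph 5)" using cd unfolding path_edge by arith
  next
    assume "{c, d} \<in> snd (path_graph 5)"
    then have "(d = Suc c \<and> d < 5) \<or> (c = Suc d \<and> c < 5)" by (simp add: path_edge)
    then show "adjB (constr_graph Q S n) psc c d"
    proof
      assume "d = Suc c \<and> d < 5" then show ?thesis using key[of c] by simp
    next
      assume "c = Suc d \<and> c < 5" then show ?thesis using key[of d] by simp
    qed
  qed
qed

lemma colour_contracts: "has_contraction (constr_graph Q S n) (path_graph 5)"
proof -
  have "\<forall>c\<in>psc ` V. conn E {x\<in>V. psc x = c}" using bag_conn by blast
  from contraction_of_witness[OF wfG this] obtain G' where G':
    "contracts_to (constr_graph Q S n) G'" "fst G' \<subseteq> V" "inj_on psc (fst G')" "psc ` fst G' = psc ` V"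
    "\<forall>x\<in>fst G'. \<forall>y\<in>fst G'. {x, y} \<in> snd G' \<longleftrightarrow> (psc x \<noteq> psc y \<and> adjB (constr_graph Q S n) psc (psc x) (psc y))"
    by blast
  have "graph_iso G' (path_graph 5)" unfolding graph_iso_def
  proof (intro exI[of _ psc] conjI ballI)
    show "bij_betw psc (fst G') (fst (path_graph 5))"
      using G'(3,4) img by (simp add: bij_betw_def path_graph_def)
  next
    fix x y assume xy: "x \<in> fst G'" "y \<in> fst G'"
    have r: "psc x < 5" "psc y < 5" using xy G'(2) psiC_range by auto
    show "{x, y} \<in> snd G' \<longleftrightarrow> {psc x, psc y} \<in> snd (path_graph 5)"
    proof (cases "psc x = psc y")
      case True then show ?thesis using G'(5) xy by (auto simp: path_single)
    next
      case False then show ?thesis using G'(5) xy adj_iff[OF False r] by auto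
    qed
  qed
  then show ?thesis unfolding has_contraction_def using G'(1) by blast
qed

end
end

context hg begin

definition good :: "('q gvert \<Rightarrow> int) \<Rightarrow> bool" where
  "good \<psi> \<longleftrightarrow> (\<forall>x\<in>V. 0 \<le> \<psi> x \<and> \<psi> x \<le> 4) \<and> (\<forall>x y. {x, y} \<in> E \<longrightarrow> \<psi> x \<le> \<psi> y + 1 \<and> \<psi> y \<le> \<psi> x + 1)
     \<and> (\<forall>c. conn E {x\<in>V. \<psi> x = c})"

lemma good_rev: "good \<psi> \<Longrightarrow> good (\<lambda>x. 4 - \<psi> x)"
proof -
  assume g: "good \<psi>"
  have "{x\<in>V. 4 - \<psi> x = c} = {x\<in>V. \<psi> x = 4 - c}" for c by auto
  moreover have "\<forall>x y. {x, y} \<in> E \<longrightarrow> 4 - \<psi> x \<le> 4 - \<psi> y + 1 \<and> 4 - \<psi> y \<le> 4 - \<psi> x + 1"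
  proof (intro allI impI)
    fix x y assume "{x, y} \<in> E"
    then have "\<psi> x \<le> \<psi> y + 1 \<and> \<psi> y \<le> \<psi> x + 1" using g unfolding good_def by blast
    then show "4 - \<psi> x \<le> 4 - \<psi> y + 1 \<and> 4 - \<psi> y \<le> 4 - \<psi> x + 1" by linarith
  qed
  ultimately show ?thesis using g unfolding good_def by auto
qed

lemma one_neq: "k \<in> {1..n} \<Longrightarrow> (if k = 1 then 2 else 1) \<in> {1..n} \<and> (if k = 1 then 2 else 1) \<noteq> k"
  using n2 by auto

context
  fixes \<psi> :: "'q gvert \<Rightarrow> int"
  assumes gd: "good \<psi>"
begin

lemma eb: "{x, y} \<in> E \<Longrightarrow> \<psi> x \<le> \<psi> y + 1 \<and> \<psi> y \<le> \<psi> x + 1"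
  using gd unfolding good_def by blast

lemma rng: "x \<in> V \<Longrightarrow> 0 \<le> \<psi> x \<and> \<psi> x \<le> 4"
  using gd unfolding good_def by blast

lemma cn: "conn E {x\<in>V. \<psi> x = c}"
  using gd unfolding good_def by blast

lemma ends:
  assumes aV: "a \<in> V" and bV: "b \<in> V" and a0: "\<psi> a = 0" and b4: "\<psi> b = 4"
  shows "(a = Wv \<and> b = Vv) \<or> (a = Wv \<and> b = Qstar) \<or> (\<exists>q\<in>Q. a = Qv q \<and> b = Vv)
    \<or> (a = Vv \<and> b = Wv) \<or> (a = Qstar \<and> b = Wv) \<or> (\<exists>q\<in>Q. a = Vv \<and> b = Qv q)"
proof (cases a)
  case (Qv qa) note A = this
  have qa_Q: "qa \<in> Q" using aV A by simp
  have qa_Sn: "qa \<in> S n" using qa_Q Sn by simp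
  show ?thesis
  proof (cases b)
    case (Qv qb) note B = this
    have qb_Q: "qb \<in> Q" using bV B by simp
    have qb_Sn: "qb \<in> S n" using qb_Q Sn by simp
    have False using a0 b4 eb[OF eQSp[OF n_in qb_Sn]] eb[OF eQSp[OF n_in qa_Sn]] unfolding A B by linarith
    then show ?thesis ..
  next
    case (Sv jb) note B = this
    have jb_I: "jb \<in> {1..n}" using bV B by simp
    have False using a0 b4 eb[OF eSSp[OF jb_I n_in]] eb[OF eQSp[OF n_in qa_Sn]] unfolding A B by linarith
    then show ?thesis ..
  next
    case (Sp jb) note B = this
    have jb_I: "jb \<in> {1..n}" using bV B by simp
    have False using a0 b4 eb[OF eSSp[OF n_in jb_I]] eb[OF eQS[OF n_in qa_Sn]] eb[OF eQQ[OF n_in qa_Sn]] unfolding A B by linarith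
    then show ?thesis ..
  next
    case (Qij qb jb) note B = this
    have jb_I: "jb \<in> {1..n}" using bV B by simp
    have qb_S: "qb \<in> S jb" using bV B by simp
    have qb_Q: "qb \<in> Q" using jb_I qb_S Ssub by auto
    have qb_Sn: "qb \<in> S n" using qb_Q Sn by simp
    have False using a0 b4 eb[OF eQs[OF jb_I qb_S]] eb[OF eQs[OF n_in qa_Sn]] eb[OF eQQ[OF n_in qa_Sn]] unfolding A B by linarith
    then show ?thesis ..
  next
    case Qstar note B = this
    have False using a0 b4 eb[OF eQs[OF n_in qa_Sn]] eb[OF eQQ[OF n_in qa_Sn]] unfolding A B by linarith
    then show ?thesis ..
  next
    case U1 note B = this
    have False using a0 b4 eb[OF eSU1] eb[OF eQs[OF n_in qa_Sn]] eb[OF eQQ[OF n_in qa_Sn]] unfolding A B by linarith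
    then show ?thesis ..
  next
    case U2 note B = this
    have False using a0 b4 eb[OF eSU2] eb[OF eQs[OF n_in qa_Sn]] eb[OF eQQ[OF n_in qa_Sn]] unfolding A B by linarith
    then show ?thesis ..
  next
    case Vv note B = this
    show ?thesis using A B qa_Q by auto
  next
    case Wv note B = this
    have False using a0 b4 eb[OF eWSp[OF n_in]] eb[OF eQSp[OF n_in qa_Sn]] unfolding A B by linarith
    then show ?thesis ..
  qed
next
  case (Sv ja) note A = this
  have ja_I: "ja \<in> {1..n}" using aV A by simp
  show ?thesis
  proof (cases b)
    case (Qv qb) note B = this
    have qb_Q: "qb \<in> Q" using bV B by simp
    have qb_Sn: "qb \<in> S n" using qb_Q Sn by simp
    have False using a0 b4 eb[OF eQSp[OF n_in qb_Sn]] eb[OF eSSp[OF ja_I n_in]] unfolding A B by linarith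
    then show ?thesis ..
  next
    case (Sv jb) note B = this
    have jb_I: "jb \<in> {1..n}" using bV B by simp
    have False using a0 b4 eb[OF eSSp[OF jb_I n_in]] eb[OF eSSp[OF ja_I n_in]] unfolding A B by linarith
    then show ?thesis ..
  next
    case (Sp jb) note B = this
    have jb_I: "jb \<in> {1..n}" using bV B by simp
    have False using a0 b4 eb[OF eSSp[OF ja_I jb_I]] unfolding A B by linarith
    then show ?thesis ..
  next
    case (Qij qb jb) note B = this
    have jb_I: "jb \<in> {1..n}" using bV B by simp
    have qb_S: "qb \<in> S jb" using bV B by simp
    have qb_Q: "qb \<in> Q" using jb_I qb_S Ssub by auto
    have qb_Sn: "qb \<in> S n" using qb_Q Sn by simp
    have False using a0 b4 eb[OF eQQ[OF jb_I qb_S]] eb[OF eQSp[OF jb_I qb_S]] eb[OF eSSp[OF ja_I jb_I]] unfolding A B by linarith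
    then show ?thesis ..
  next
    case Qstar note B = this
    have False using a0 b4 eb[OF eSU1] eb[OF eU1S[OF ja_I]] unfolding A B by linarith
    then show ?thesis ..
  next
    case U1 note B = this
    have False using a0 b4 eb[OF eU1S[OF ja_I]] unfolding A B by linarith
    then show ?thesis ..
  next
    case U2 note B = this
    have False using a0 b4 eb[OF eU2S[OF ja_I]] unfolding A B by linarith
    then show ?thesis ..
  next
    case Vv note B = this
    have False using a0 b4 eb[OF eU1V] eb[OF eU1S[OF ja_I]] unfolding A B by linarith
    then show ?thesis ..
  next
    case Wv note B = this
    have False using a0 b4 eb[OF eWSp[OF n_in]] eb[OF eSSp[OF ja_I n_in]] unfolding A B by linarith
    then show ?thesis ..
  qed
next
  case (Sp ja) note A = this
  have ja_I: "ja \<in> {1..n}" using aV A by simp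
  show ?thesis
  proof (cases b)
    case (Qv qb) note B = this
    have qb_Q: "qb \<in> Q" using bV B by simp
    have qb_Sn: "qb \<in> S n" using qb_Q Sn by simp
    have False using a0 b4 eb[OF eQQ[OF n_in qb_Sn]] eb[OF eQS[OF n_in qb_Sn]] eb[OF eSSp[OF n_in ja_I]] unfolding A B by linarith
    then show ?thesis ..
  next
    case (Sv jb) note B = this
    have jb_I: "jb \<in> {1..n}" using bV B by simp
    have False using a0 b4 eb[OF eSSp[OF jb_I ja_I]] unfolding A B by linarith
    then show ?thesis ..
  next
    case (Sp jb) note B = this
    have jb_I: "jb \<in> {1..n}" using bV B by simp
    have False using a0 b4 eb[OF eSSp[OF n_in jb_I]] eb[OF eSSp[OF n_in ja_I]] unfolding A B by linarith
    then show ?thesis ..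
  next
    case (Qij qb jb) note B = this
    have jb_I: "jb \<in> {1..n}" using bV B by simp
    have qb_S: "qb \<in> S jb" using bV B by simp
    have qb_Q: "qb \<in> Q" using jb_I qb_S Ssub by auto
    have qb_Sn: "qb \<in> S n" using qb_Q Sn by simp
    have False using a0 b4 eb[OF eQS[OF jb_I qb_S]] eb[OF eSSp[OF jb_I ja_I]] unfolding A B by linarith
    then show ?thesis ..
  next
    case Qstar note B = this
    have False using a0 b4 eb[OF eSU1] eb[OF eU1S[OF n_in]] eb[OF eSSp[OF n_in ja_I]] unfolding A B by linarith
    then show ?thesis ..
  next
    case U1 note B = this
    have False using a0 b4 eb[OF eU1S[OF n_in]] eb[OF eSSp[OF n_in ja_I]] unfolding A B by linarith
    then show ?thesis ..
  next
    case U2 note B = this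
    have False using a0 b4 eb[OF eU2S[OF n_in]] eb[OF eSSp[OF n_in ja_I]] unfolding A B by linarith
    then show ?thesis ..
  next
    case Vv note B = this
    have False using a0 b4 eb[OF eU1V] eb[OF eU1S[OF n_in]] eb[OF eSSp[OF n_in ja_I]] unfolding A B by linarith
    then show ?thesis ..
  next
    case Wv note B = this
    have False using a0 b4 eb[OF eWSp[OF ja_I]] unfolding A B by linarith
    then show ?thesis ..
  qed
next
  case (Qij qa ja) note A = this
  have ja_I: "ja \<in> {1..n}" using aV A by simp
  have qa_S: "qa \<in> S ja" using aV A by simp
  have qa_Q: "qa \<in> Q" using ja_I qa_S Ssub by auto
  have qa_Sn: "qa \<in> S n" using qa_Q Sn by simp
  show ?thesis
  proof (cases b)
    case (Qv qb) note B = this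
    have qb_Q: "qb \<in> Q" using bV B by simp
    have qb_Sn: "qb \<in> S n" using qb_Q Sn by simp
    have False using a0 b4 eb[OF eQQ[OF n_in qb_Sn]] eb[OF eQs[OF n_in qb_Sn]] eb[OF eQs[OF ja_I qa_S]] unfolding A B by linarith
    then show ?thesis ..
  next
    case (Sv jb) note B = this
    have jb_I: "jb \<in> {1..n}" using bV B by simp
    have False using a0 b4 eb[OF eU1S[OF jb_I]] eb[OF eSU1] eb[OF eQs[OF ja_I qa_S]] unfolding A B by linarith
    then show ?thesis ..
  next
    case (Sp jb) note B = this
    have jb_I: "jb \<in> {1..n}" using bV B by simp
    have False using a0 b4 eb[OF eSSp[OF ja_I jb_I]] eb[OF eQS[OF ja_I qa_S]] unfolding A B by linarith
    then show ?thesis ..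
  next
    case (Qij qb jb) note B = this
    have jb_I: "jb \<in> {1..n}" using bV B by simp
    have qb_S: "qb \<in> S jb" using bV B by simp
    have qb_Q: "qb \<in> Q" using jb_I qb_S Ssub by auto
    have qb_Sn: "qb \<in> S n" using qb_Q Sn by simp
    have False using a0 b4 eb[OF eQs[OF jb_I qb_S]] eb[OF eQs[OF ja_I qa_S]] unfolding A B by linarith
    then show ?thesis ..
  next
    case Qstar note B = this
    have False using a0 b4 eb[OF eQs[OF ja_I qa_S]] unfolding A B by linarith
    then show ?thesis ..
  next
    case U1 note B = this
    have False using a0 b4 eb[OF eSU1] eb[OF eQs[OF ja_I qa_S]] unfolding A B by linarith
    then show ?thesis ..
  next
    case U2 note B = this
    have False using a0 b4 eb[OF eSU2] eb[OF eQs[OF ja_I qa_S]] unfolding A B by linarith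
    then show ?thesis ..
  next
    case Vv note B = this
    have False using a0 b4 eb[OF eU1V] eb[OF eSU1] eb[OF eQs[OF ja_I qa_S]] unfolding A B by linarith
    then show ?thesis ..
  next
    case Wv note B = this
    have False using a0 b4 eb[OF eWSp[OF ja_I]] eb[OF eQSp[OF ja_I qa_S]] eb[OF eQQ[OF ja_I qa_S]] unfolding A B by linarith
    then show ?thesis ..
  qed
next
  case Qstar note A = this
  show ?thesis
  proof (cases b)
    case (Qv qb) note B = this
    have qb_Q: "qb \<in> Q" using bV B by simp
    have qb_Sn: "qb \<in> S n" using qb_Q Sn by simp
    have False using a0 b4 eb[OF eQQ[OF n_in qb_Sn]] eb[OF eQs[OF n_in qb_Sn]] unfolding A B by linarith
    then show ?thesis ..
  next
    case (Sv jb) note B = this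
    have jb_I: "jb \<in> {1..n}" using bV B by simp
    have False using a0 b4 eb[OF eU1S[OF jb_I]] eb[OF eSU1] unfolding A B by linarith
    then show ?thesis ..
  next
    case (Sp jb) note B = this
    have jb_I: "jb \<in> {1..n}" using bV B by simp
    have False using a0 b4 eb[OF eSSp[OF n_in jb_I]] eb[OF eU1S[OF n_in]] eb[OF eSU1] unfolding A B by linarith
    then show ?thesis ..
  next
    case (Qij qb jb) note B = this
    have jb_I: "jb \<in> {1..n}" using bV B by simp
    have qb_S: "qb \<in> S jb" using bV B by simp
    have qb_Q: "qb \<in> Q" using jb_I qb_S Ssub by auto
    have qb_Sn: "qb \<in> S n" using qb_Q Sn by simp
    have False using a0 b4 eb[OF eQs[OF jb_I qb_S]] unfolding A B by linarith
    then show ?thesis ..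
  next
    case Qstar note B = this
    have False using a0 b4  unfolding A B by linarith
    then show ?thesis ..
  next
    case U1 note B = this
    have False using a0 b4 eb[OF eSU1] unfolding A B by linarith
    then show ?thesis ..
  next
    case U2 note B = this
    have False using a0 b4 eb[OF eSU2] unfolding A B by linarith
    then show ?thesis ..
  next
    case Vv note B = this
    have False using a0 b4 eb[OF eU1V] eb[OF eSU1] unfolding A B by linarith
    then show ?thesis ..
  next
    case Wv note B = this
    show ?thesis using A B  by auto
  qed
next
  case U1 note A = this
  show ?thesis
  proof (cases b)
    case (Qv qb) note B = this
    have qb_Q: "qb \<in> Q" using bV B by simp
    have qb_Sn: "qb \<in> S n" using qb_Q Sn by simp
    have False using a0 b4 eb[OF eQQ[OF n_in qb_Sn]] eb[OF eQs[OF n_in qb_Sn]] eb[OF eSU1] unfolding A B by linarith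
    then show ?thesis ..
  next
    case (Sv jb) note B = this
    have jb_I: "jb \<in> {1..n}" using bV B by simp
    have False using a0 b4 eb[OF eU1S[OF jb_I]] unfolding A B by linarith
    then show ?thesis ..
  next
    case (Sp jb) note B = this
    have jb_I: "jb \<in> {1..n}" using bV B by simp
    have False using a0 b4 eb[OF eSSp[OF n_in jb_I]] eb[OF eU1S[OF n_in]] unfolding A B by linarith
    then show ?thesis ..
  next
    case (Qij qb jb) note B = this
    have jb_I: "jb \<in> {1..n}" using bV B by simp
    have qb_S: "qb \<in> S jb" using bV B by simp
    have qb_Q: "qb \<in> Q" using jb_I qb_S Ssub by auto
    have qb_Sn: "qb \<in> S n" using qb_Q Sn by simp
    have False using a0 b4 eb[OF eQs[OF jb_I qb_S]] eb[OF eSU1] unfolding A B by linarith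
    then show ?thesis ..
  next
    case Qstar note B = this
    have False using a0 b4 eb[OF eSU1] unfolding A B by linarith
    then show ?thesis ..
  next
    case U1 note B = this
    have False using a0 b4  unfolding A B by linarith
    then show ?thesis ..
  next
    case U2 note B = this
    have False using a0 b4 eb[OF eSU2] eb[OF eSU1] unfolding A B by linarith
    then show ?thesis ..
  next
    case Vv note B = this
    have False using a0 b4 eb[OF eU1V] unfolding A B by linarith
    then show ?thesis ..
  next
    case Wv note B = this
    have False using a0 b4 eb[OF eWSp[OF n_in]] eb[OF eSSp[OF n_in n_in]] eb[OF eU1S[OF n_in]] unfolding A B by linarith
    then show ?thesis ..
  qed
next
  case U2 note A = this
  show ?thesis
  proof (cases b)
    case (Qv qb) note B = this
    have qb_Q: "qb \<in> Q" using bV B by simp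
    have qb_Sn: "qb \<in> S n" using qb_Q Sn by simp
    have False using a0 b4 eb[OF eQQ[OF n_in qb_Sn]] eb[OF eQs[OF n_in qb_Sn]] eb[OF eSU2] unfolding A B by linarith
    then show ?thesis ..
  next
    case (Sv jb) note B = this
    have jb_I: "jb \<in> {1..n}" using bV B by simp
    have False using a0 b4 eb[OF eU2S[OF jb_I]] unfolding A B by linarith
    then show ?thesis ..
  next
    case (Sp jb) note B = this
    have jb_I: "jb \<in> {1..n}" using bV B by simp
    have False using a0 b4 eb[OF eSSp[OF n_in jb_I]] eb[OF eU2S[OF n_in]] unfolding A B by linarith
    then show ?thesis ..
  next
    case (Qij qb jb) note B = this
    have jb_I: "jb \<in> {1..n}" using bV B by simp
    have qb_S: "qb \<in> S jb" using bV B by simp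
    have qb_Q: "qb \<in> Q" using jb_I qb_S Ssub by auto
    have qb_Sn: "qb \<in> S n" using qb_Q Sn by simp
    have False using a0 b4 eb[OF eQs[OF jb_I qb_S]] eb[OF eSU2] unfolding A B by linarith
    then show ?thesis ..
  next
    case Qstar note B = this
    have False using a0 b4 eb[OF eSU2] unfolding A B by linarith
    then show ?thesis ..
  next
    case U1 note B = this
    have False using a0 b4 eb[OF eSU1] eb[OF eSU2] unfolding A B by linarith
    then show ?thesis ..
  next
    case U2 note B = this
    have False using a0 b4  unfolding A B by linarith
    then show ?thesis ..
  next
    case Vv note B = this
    have False using a0 b4 eb[OF eU2V] unfolding A B by linarith
    then show ?thesis ..
  next
    case Wv note B = this
    have False using a0 b4 eb[OF eWSp[OF n_in]] eb[OF eSSp[OF n_in n_in]] eb[OF eU2S[OF n_in]] unfolding A B by linarith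
    then show ?thesis ..
  qed
next
  case Vv note A = this
  show ?thesis
  proof (cases b)
    case (Qv qb) note B = this
    have qb_Q: "qb \<in> Q" using bV B by simp
    have qb_Sn: "qb \<in> S n" using qb_Q Sn by simp
    show ?thesis using A B qb_Q by auto
  next
    case (Sv jb) note B = this
    have jb_I: "jb \<in> {1..n}" using bV B by simp
    have False using a0 b4 eb[OF eU1S[OF jb_I]] eb[OF eU1V] unfolding A B by linarith
    then show ?thesis ..
  next
    case (Sp jb) note B = this
    have jb_I: "jb \<in> {1..n}" using bV B by simp
    have False using a0 b4 eb[OF eSSp[OF n_in jb_I]] eb[OF eU1S[OF n_in]] eb[OF eU1V] unfolding A B by linarith
    then show ?thesis ..
  next
    case (Qij qb jb) note B = this
    have jb_I: "jb \<in> {1..n}" using bV B by simp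
    have qb_S: "qb \<in> S jb" using bV B by simp
    have qb_Q: "qb \<in> Q" using jb_I qb_S Ssub by auto
    have qb_Sn: "qb \<in> S n" using qb_Q Sn by simp
    have False using a0 b4 eb[OF eQs[OF jb_I qb_S]] eb[OF eSU1] eb[OF eU1V] unfolding A B by linarith
    then show ?thesis ..
  next
    case Qstar note B = this
    have False using a0 b4 eb[OF eSU1] eb[OF eU1V] unfolding A B by linarith
    then show ?thesis ..
  next
    case U1 note B = this
    have False using a0 b4 eb[OF eU1V] unfolding A B by linarith
    then show ?thesis ..
  next
    case U2 note B = this
    have False using a0 b4 eb[OF eU2V] unfolding A B by linarith
    then show ?thesis ..
  next
    case Vv note B = this
    have False using a0 b4  unfolding A B by linarith
    then show ?thesis ..
  next
    case Wv note B = this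
    show ?thesis using A B  by auto
  qed
next
  case Wv note A = this
  show ?thesis
  proof (cases b)
    case (Qv qb) note B = this
    have qb_Q: "qb \<in> Q" using bV B by simp
    have qb_Sn: "qb \<in> S n" using qb_Q Sn by simp
    have False using a0 b4 eb[OF eQSp[OF n_in qb_Sn]] eb[OF eWSp[OF n_in]] unfolding A B by linarith
    then show ?thesis ..
  next
    case (Sv jb) note B = this
    have jb_I: "jb \<in> {1..n}" using bV B by simp
    have False using a0 b4 eb[OF eSSp[OF jb_I n_in]] eb[OF eWSp[OF n_in]] unfolding A B by linarith
    then show ?thesis ..
  next
    case (Sp jb) note B = this
    have jb_I: "jb \<in> {1..n}" using bV B by simp
    have False using a0 b4 eb[OF eWSp[OF jb_I]] unfolding A B by linarith
    then show ?thesis ..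
  next
    case (Qij qb jb) note B = this
    have jb_I: "jb \<in> {1..n}" using bV B by simp
    have qb_S: "qb \<in> S jb" using bV B by simp
    have qb_Q: "qb \<in> Q" using jb_I qb_S Ssub by auto
    have qb_Sn: "qb \<in> S n" using qb_Q Sn by simp
    have False using a0 b4 eb[OF eQQ[OF jb_I qb_S]] eb[OF eQSp[OF jb_I qb_S]] eb[OF eWSp[OF jb_I]] unfolding A B by linarith
    then show ?thesis ..
  next
    case Qstar note B = this
    show ?thesis using A B  by auto
  next
    case U1 note B = this
    have False using a0 b4 eb[OF eU1S[OF n_in]] eb[OF eSSp[OF n_in n_in]] eb[OF eWSp[OF n_in]] unfolding A B by linarith
    then show ?thesis ..
  next
    case U2 note B = this
    have False using a0 b4 eb[OF eU2S[OF n_in]] eb[OF eSSp[OF n_in n_in]] eb[OF eWSp[OF n_in]] unfolding A B by linarith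
    then show ?thesis ..
  next
    case Vv note B = this
    show ?thesis using A B  by auto
  next
    case Wv note B = this
    have False using a0 b4  unfolding A B by linarith
    then show ?thesis ..
  qed
qed
end
end

context hg begin
context
  fixes \<psi> :: "'q gvert \<Rightarrow> int"
  assumes gd: "good \<psi>"
begin

lemmas ebp = eb[OF gd]

lemma L_wq: assumes w0: "\<psi> Wv = 0" and s4: "\<psi> Qstar = 4" shows False
proof -
  obtain q where q: "q \<in> S 1" using Ssub one_in by blast
  have qQ: "q \<in> Q" using q Ssub one_in by blast
  have qn: "q \<in> S n" using qQ Sn by simp
  have h1: "\<psi> (Qij q 1) = 3"
    using ebp[OF eQs[OF one_in q]] ebp[OF eQS[OF one_in q]] ebp[OF eSSp[OF one_in n_in]]
      ebp[OF eWSp[OF n_in]] w0 s4 by linarith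
  have h2: "\<psi> U1 = 3"
    using ebp[OF eSU1] ebp[OF eU1S[OF n_in]] ebp[OF eSSp[OF n_in n_in]] ebp[OF eWSp[OF n_in]] w0 s4
    by linarith
  have "Qij q 1 \<in> {x\<in>V. \<psi> x = 3}" "U1 \<in> {x\<in>V. \<psi> x = 3}" using h1 h2 q one_in by auto
  then obtain z where z: "{Qij q 1, z} \<in> E" "z \<in> V" "\<psi> z = 3"
    using conn_nbr[OF cn[OF gd]] by blast
  have "\<psi> (Qv q) \<le> 2" using ebp[OF eQSp[OF n_in qn]] ebp[OF eWSp[OF n_in]] w0 by linarith
  moreover have "\<psi> (Sv 1) \<le> 2" using ebp[OF eSSp[OF one_in n_in]] ebp[OF eWSp[OF n_in]] w0 by linarith
  ultimately show False using nbr_Qij[OF z(1)] z(3) s4 by auto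
qed

lemma L_qv: assumes qQ: "q \<in> Q" and q0: "\<psi> (Qv q) = 0" and v4: "\<psi> Vv = 4" shows False
proof -
  have qn: "q \<in> S n" using qQ Sn by simp
  have sp: "\<psi> (Sp n) \<le> 1" using ebp[OF eQSp[OF n_in qn]] q0 by linarith
  have h1: "\<psi> U1 = 3"
    using ebp[OF eU1V] ebp[OF eU1S[OF n_in]] ebp[OF eSSp[OF n_in n_in]] sp v4 by linarith
  have h2: "\<psi> U2 = 3"
    using ebp[OF eU2V] ebp[OF eU2S[OF n_in]] ebp[OF eSSp[OF n_in n_in]] sp v4 by linarith
  have "U1 \<in> {x\<in>V. \<psi> x = 3}" "U2 \<in> {x\<in>V. \<psi> x = 3}" using h1 h2 by auto
  then obtain z where z: "{U1, z} \<in> E" "z \<in> V" "\<psi> z = 3"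
    using conn_nbr[OF cn[OF gd]] by blast
  have "\<psi> Qstar \<le> 2" using ebp[OF eQs[OF n_in qn]] ebp[OF eQQ[OF n_in qn]] q0 by linarith
  moreover have svl: "\<psi> (Sv j) \<le> 2" if "j \<in> {1..n}" for j using ebp[OF eSSp[OF that n_in]] sp by linarith
  moreover have "z = Qstar \<or> z = Vv \<or> (\<exists>j. z = Sv j)" by (rule nbr_U1[OF z(1)])
  ultimately show False
  proof (elim disjE exE)
    fix j assume "z = Sv j"
    then have "j \<in> {1..n}" "\<psi> (Sv j) = 3" using z(2,3) by auto
    then show False using svl by fastforce
  qed (use z(3) v4 in auto)
qed

lemma L_wv: assumes w0: "\<psi> Wv = 0" and v4: "\<psi> Vv = 4" shows "two_colourable Q S n"
proof -
  have spn: "\<psi> (Sp n) \<le> 1" using ebp[OF eWSp[OF n_in]] w0 by linarith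
  have u1: "\<psi> U1 = 3"
    using ebp[OF eU1V] ebp[OF eU1S[OF n_in]] ebp[OF eSSp[OF n_in n_in]] spn v4 by linarith
  have u2: "\<psi> U2 = 3"
    using ebp[OF eU2V] ebp[OF eU2S[OF n_in]] ebp[OF eSSp[OF n_in n_in]] spn v4 by linarith
  have sv: "\<psi> (Sv j) = 2" if "j \<in> {1..n}" for j
    using ebp[OF eSSp[OF that n_in]] ebp[OF eU1S[OF that]] spn u1 by linarith
  have sp: "\<psi> (Sp j) = 1" if "j \<in> {1..n}" for j
    using ebp[OF eSSp[OF n_in that]] ebp[OF eWSp[OF that]] sv[OF n_in] w0 by linarith
  have "U1 \<in> {x\<in>V. \<psi> x = 3}" "U2 \<in> {x\<in>V. \<psi> x = 3}" using u1 u2 by auto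
  then obtain z where z: "{U1, z} \<in> E" "z \<in> V" "\<psi> z = 3"
    using conn_nbr[OF cn[OF gd]] by blast
  have st: "\<psi> Qstar = 3" using nbr_U1[OF z(1)] z(2,3) v4 sv by auto
  have qij: "\<psi> (Qij q j) \<noteq> 1" if "j \<in> {1..n}" "q \<in> S j" for q j
    using ebp[OF eQs[OF that]] st by linarith
  have qv: "\<psi> (Qv q) = 1 \<or> \<psi> (Qv q) = 2" if "q \<in> Q" for q
  proof -
    have qn: "q \<in> S n" using that Sn by simp
    show ?thesis using ebp[OF eQSp[OF n_in qn]] ebp[OF eQQ[OF n_in qn]] ebp[OF eQs[OF n_in qn]]
      sp[OF n_in] st by linarith
  qed
  define Q1 where "Q1 = {q\<in>Q. \<psi> (Qv q) = 1}"
  define Q2 where "Q2 = {q\<in>Q. \<psi> (Qv q) \<noteq> 1}"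
  show ?thesis unfolding two_colourable_def
  proof (rule exI[of _ Q1], rule exI[of _ Q2], intro conjI ballI)
    show "Q1 \<union> Q2 = Q" unfolding Q1_def Q2_def by auto
    show "Q1 \<inter> Q2 = {}" unfolding Q1_def Q2_def by auto
  next
    fix j assume j: "j \<in> {1..n}"
    define k where "k = (if j = 1 then 2 else (1::nat))"
    have k: "k \<in> {1..n}" "k \<noteq> j" using one_neq[OF j] k_def by auto
    have "Sp j \<in> {x\<in>V. \<psi> x = 1}" "Sp k \<in> {x\<in>V. \<psi> x = 1}" using sp j k by auto
    then obtain z where z: "{Sp j, z} \<in> E" "z \<in> V" "\<psi> z = 1"
      using conn_nbr[OF cn[OF gd]] k(2) by blast
    have "z = Wv \<or> (\<exists>k. z = Sv k) \<or> (\<exists>q. z = Qv q \<and> q \<in> S j)" using nbr_Sp[OF z(1)] .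
    then obtain q where q: "z = Qv q" "q \<in> S j" using z(2,3) w0 sv by auto
    then have "q \<in> Q1" using z(2,3) unfolding Q1_def by auto
    then show "Q1 \<inter> S j \<noteq> {}" using q by blast
  next
    fix j assume j: "j \<in> {1..n}"
    define k where "k = (if j = 1 then 2 else (1::nat))"
    have k: "k \<in> {1..n}" "k \<noteq> j" using one_neq[OF j] k_def by auto
    show "Q2 \<inter> S j \<noteq> {}"
    proof
      assume none: "Q2 \<inter> S j = {}"
      have all1: "\<psi> (Qv q) = 1" if "q \<in> S j" for q
      proof -
        have "q \<in> Q" using that j Ssub by blast
        then show ?thesis using none that unfolding Q2_def by blast
      qed
      let ?B = "{x\<in>V. \<psi> x = 2}"
      let ?C = "{Sv j} \<union> {Qij q j | q. True} :: 'q gvert set"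
      have r: "(Sv j, Sv k) \<in> (crel E ?B)\<^sup>*" using cn[OF gd] sv j k unfolding conn_def by auto
      have c: "Sv j \<in> ?C" by simp
      have clo: "b \<in> ?C" if ab: "(a, b) \<in> crel E ?B" "a \<in> ?C" for a b
      proof -
        have e: "{a, b} \<in> E" "a \<in> ?B" "b \<in> ?B" using ab(1) unfolding crel_def by auto
        from ab(2) show ?thesis
        proof
          assume "a \<in> {Sv j}"
          then have a: "a = Sv j" by simp
          have "b = U1 \<or> b = U2 \<or> (\<exists>k. b = Sp k) \<or> (\<exists>q. b = Qij q j)" using nbr_Sv e(1) a by simp
          then show ?thesis using e(3) u1 u2 sp by auto
        next
          assume "a \<in> {Qij q j | q. True}"
          then obtain q where a: "a = Qij q j" by blast
          then have qS: "q \<in> S j" using e(2) by simp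
          have "b = Qstar \<or> b = Qv q \<or> b = Sv j" using nbr_Qij e(1) a by simp
          then show ?thesis using e(3) st all1[OF qS] by auto
        qed
      qed
      have gen: "y \<in> ?C" if "(Sv j, y) \<in> (crel E ?B)\<^sup>*" for y
        using that
      proof (induction rule: rtrancl_induct)
        case base show ?case by simp
      next
        case (step y z) then show ?case using clo by blast
      qed
      have "Sv k \<in> ?C" using gen[OF r] .
      then show False using k(2) by auto
    qed
  qed
qed

end

lemma comb:
  assumes gd: "good \<psi>" and a: "a \<in> V" "\<psi> a = 0" and b: "b \<in> V" "\<psi> b = 4"
  shows "two_colourable Q S n"
proof -
  have gr: "good (\<lambda>x. 4 - \<psi> x)" using good_rev[OF gd] .
  from ends[OF gd a(1) b(1) a(2) b(2)] show ?thesis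
  proof (elim disjE bexE conjE)
    assume "a = Wv" "b = Vv" then show ?thesis using L_wv[OF gd] a b by simp
  next
    assume "a = Wv" "b = Qstar" then show ?thesis using L_wq[OF gd] a b by simp
  next
    fix q assume "q \<in> Q" "a = Qv q" "b = Vv" then show ?thesis using L_qv[OF gd \<open>q \<in> Q\<close>] a b by simp
  next
    assume "a = Vv" "b = Wv" then show ?thesis using L_wv[OF gr] a b by simp
  next
    assume "a = Qstar" "b = Wv" then show ?thesis using L_wq[OF gr] a b by simp
  next
    fix q assume "q \<in> Q" "a = Vv" "b = Qv q" then show ?thesis using L_qv[OF gr \<open>q \<in> Q\<close>] a b by simp
  qed
qed

end

theorem lemma3:
  fixes Q :: "'q set" and S :: "nat \<Rightarrow> 'q set" and n :: nat
  assumes "finite Q"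
    and "n \<ge> 2"
    and "\<forall>j\<in>{1..n}. S j \<noteq> {} \<and> S j \<subseteq> Q"
    and "S n = Q"
  shows "two_colourable Q S n \<longleftrightarrow> has_contraction (constr_graph Q S n) (path_graph 5)"
proof -
  interpret hg Q S n using assms by unfold_locales
  show ?thesis
  proof
    assume "two_colourable Q S n"
    then obtain Q1 Q2 where "Q1 \<union> Q2 = Q" "Q1 \<inter> Q2 = {}" "\<forall>j\<in>{1..n}. Q1 \<inter> S j \<noteq> {} \<and> Q2 \<inter> S j \<noteq> {}"
      unfolding two_colourable_def by blast
    then show "has_contraction (constr_graph Q S n) (path_graph 5)" by (rule colour_contracts)
  next
    assume "has_contraction (constr_graph Q S n) (path_graph 5)"
    then obtain G' where G': "contracts_to (constr_graph Q S n) G'" "graph_iso G' (path_graph 5)"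
      unfolding has_contraction_def by blast
    then obtain g where g: "bij_betw g (fst G') {0..<5}"
      "\<forall>x\<in>fst G'. \<forall>y\<in>fst G'. {x, y} \<in> snd G' \<longleftrightarrow> {g x, g y} \<in> snd (path_graph 5)"
      unfolding graph_iso_def path_graph_def by auto
    obtain \<phi> where p1: "\<forall>x\<in>V. \<phi> x \<in> fst G'" and p2: "\<forall>y\<in>fst G'. \<exists>x\<in>V. \<phi> x = y"
      and p3: "\<forall>x y. {x, y} \<in> E \<longrightarrow> \<phi> x = \<phi> y \<or> {\<phi> x, \<phi> y} \<in> snd G'"
      and p4: "\<forall>y\<in>fst G'. conn E {x\<in>V. \<phi> x = y}"
      using witness_of_contraction[OF G'(1) wfG] by blast
    define \<psi> where "\<psi> x = int (g (\<phi> x))" for x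
    have ginj: "inj_on g (fst G')" and gimg: "g ` fst G' = {0..<5}" using g(1) by (auto simp: bij_betw_def)
    have rng: "0 \<le> \<psi> x \<and> \<psi> x \<le> 4" if "x \<in> V" for x
    proof -
      have "g (\<phi> x) < 5" using p1 that gimg by auto
      then show ?thesis unfolding \<psi>_def by simp
    qed
    have edg: "\<psi> x \<le> \<psi> y + 1 \<and> \<psi> y \<le> \<psi> x + 1" if e: "{x, y} \<in> E" for x y
    proof -
      have xy: "x \<in> V" "y \<in> V" using wfg_edge[OF wfG e] by auto
      show ?thesis
      proof (cases "\<phi> x = \<phi> y")
        case True then show ?thesis unfolding \<psi>_def by simp
      next
        case False
        then have "{\<phi> x, \<phi> y} \<in> snd G'" using p3 e by blast
        then have "{g (\<phi> x), g (\<phi> y)} \<in> snd (path_graph 5)" using g(2) p1 xy by blast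
        then have "g (\<phi> y) = Suc (g (\<phi> x)) \<or> g (\<phi> x) = Suc (g (\<phi> y))" by (simp add: path_edge) blast
        then show ?thesis unfolding \<psi>_def by auto
      qed
    qed
    have cnn: "conn E {x\<in>V. \<psi> x = c}" for c
    proof (cases "\<exists>y\<in>fst G'. int (g y) = c")
      case True
      then obtain y where y: "y \<in> fst G'" "int (g y) = c" by blast
      have "{x\<in>V. \<psi> x = c} = {x\<in>V. \<phi> x = y}"
      proof (intro Collect_cong conj_cong refl)
        fix x assume "x \<in> V"
        then have "\<phi> x \<in> fst G'" using p1 by blast
        then show "\<psi> x = c \<longleftrightarrow> \<phi> x = y" unfolding \<psi>_def using y ginj inj_on_eq_iff by fastforce
      qed simp
      then show ?thesis using p4 y(1) by simp
    next
      case False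
      then have emp: "{x\<in>V. \<psi> x = c} = {}" unfolding \<psi>_def using p1 by blast
      have ce: "conn E {}" by (simp add: conn_def)
      show ?thesis by (simp only: emp ce)
    qed
    have "\<forall>x\<in>V. 0 \<le> \<psi> x \<and> \<psi> x \<le> 4" using rng by blast
    moreover have "\<forall>x y. {x, y} \<in> E \<longrightarrow> \<psi> x \<le> \<psi> y + 1 \<and> \<psi> y \<le> \<psi> x + 1" using edg by blast
    moreover have "\<forall>c. conn E {x\<in>V. \<psi> x = c}" using cnn by blast
    ultimately have gd: "good \<psi>" by (simp only: good_def simp_thms)
    have ex: "\<exists>x\<in>V. \<psi> x = int k" if "k < 5" for k
    proof -
      have "k \<in> g ` fst G'" using gimg that by simp
      then obtain y where y: "y \<in> fst G'" "k = g y" by blast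
      then obtain x where "x \<in> V" "\<phi> x = y" using p2 by blast
      then show ?thesis unfolding \<psi>_def using y(2) by blast
    qed
    obtain a where a: "a \<in> V" "\<psi> a = 0" using ex[of 0] by auto
    obtain b where b: "b \<in> V" "\<psi> b = 4" using ex[of 4] by auto
    show "two_colourable Q S n" using comb[OF gd a b] .
  qed
qed

end
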